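(* Let $\Gamma,\Delta$ be finite sets of formulas, $\alpha$ an atomic mapping for $\Gamma\cup\Delta$, and $\mathcal{U}$ the simulation base for $\Gamma\cup\Delta$ and $\alpha$. Let $\Theta_{\mathsf{At}}$ be any (possibly empty) finite set of atoms, $\Sigma$ any non-empty finite set of subformulas of formulas in $\Gamma\cup\Delta$, and $\Sigma_{\mathsf{At}}=\{p^B\mid B\in\Sigma\}$. Then for every base $\mathcal{B}\supseteq\mathcal{U}_{\mathcal{ST}}$: $\Vdash_{\mathcal{B}}\Sigma,\Theta_{\mathsf{At}}$ if and only if $\vdash_{\mathcal{B}}\ \Rightarrow\Sigma_{\mathsf{At}},\Theta_{\mathsf{At}}$.
   Context: Fix a countably infinite set $\mathsf{At}$ of atoms. Formulas are built from atoms and the constant $\bot$ using the binary connectives $\land,\lor,\to$. All contexts are finite sets (not multisets) of formulas; a comma denotes union; a subscript $\mathsf{At}$ indicates a finite set of atoms. An atomic sequent has the form $\Gamma_{\mathsf{At}} \Rightarrow \Delta_{\mathsf{At}}$. An atomic rule has finitely many (possibly zero) atomic sequents as premises and one atomic sequent as conclusion; a rule with zero premises is an atomic axiom. A base is a (possibly empty) set of atomic rules; $\mathcal{C}\supseteq\mathcal{B}$ ($\mathcal{C}$ extends $\mathcal{B}$) if $\mathcal{C}$ contains every rule of $\mathcal{B}$. Derivability $\vdash_{\mathcal{B}}$ of atomic sequents is the least relation such that: (Axiom/Weakening) if an atomic axiom with conclusion $\Gamma_{\mathsf{At}}\Rightarrow\Delta_{\mathsf{At}}$ is in $\mathcal{B}$,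 then $\vdash_{\mathcal{B}} \Theta_{\mathsf{At}},\Gamma_{\mathsf{At}}\Rightarrow\Delta_{\mathsf{At}},\Sigma_{\mathsf{At}}$ for all sets of atoms $\Theta_{\mathsf{At}},\Sigma_{\mathsf{At}}$; (Mix) if a rule with premises $\Gamma^i_{\mathsf{At}}\Rightarrow\Delta^i_{\mathsf{At}}$ ($1\le i\le n$) and conclusion $\Gamma_{\mathsf{At}}\Rightarrow\Delta_{\mathsf{At}}$ is in $\mathcal{B}$ and $\vdash_{\mathcal{B}} \Theta^i_{\mathsf{At}},\Gamma^i_{\mathsf{At}}\Rightarrow\Delta^i_{\mathsf{At}},\Sigma^i_{\mathsf{At}}$ for each $i$, then $\vdash_{\mathcal{B}} \Theta^1_{\mathsf{At}},\dots,\Theta^n_{\mathsf{At}},\Gamma_{\mathsf{At}}\Rightarrow\Delta_{\mathsf{At}},\Sigma^1_{\mathsf{At}},\dots,\Sigma^n_{\mathsf{At}}$. Support $\Vdash_{\mathcal{B}}$: (At) $\Vdash_{\mathcal{B}}\Gamma_{\mathsf{At}}$ iff $\vdash_{\mathcal{B}}\ \Rightarrow\Gamma_{\mathsf{At}}$; ($\land$) $\Vdash_{\mathcal{B}} A\land B,\Gamma$ iff $\Vdash_{\mathcal{B}}A,\Gamma$ and $\Vdash_{\mathcal{B}}B,\Gamma$; ($\lor$) $\Vdash_{\mathcal{B}}A\lor B,\Gamma$ iff $\Vdash_{\mathcal{B}}A,B,\Gamma$; ($\to$) $\Vdash_{\mathcal{B}}A\to B,\Gamma$ iff $A\Vdash_{\mathcal{B}}B,\Gamma$;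 ($\bot$) $\Vdash_{\mathcal{B}}\bot,\Gamma$ iff $\Vdash_{\mathcal{B}}\Gamma$; (Inf) for $n\ge1$, $\{A^1,\dots,A^n\}\Vdash_{\mathcal{B}}\Delta$ iff for every $\mathcal{C}\supseteq\mathcal{B}$ and all sets of atoms $\Theta^1_{\mathsf{At}},\dots,\Theta^n_{\mathsf{At}}$, if $\Vdash_{\mathcal{C}}\Theta^i_{\mathsf{At}},A^i$ for all $i$ then $\Vdash_{\mathcal{C}}\Theta^1_{\mathsf{At}},\dots,\Theta^n_{\mathsf{At}},\Delta$ (and $\varnothing\Vdash_{\mathcal{B}}\Delta$ means $\Vdash_{\mathcal{B}}\Delta$). The atomic identity rule $\mathsf{Ainit}$ is the atomic axiom $\Gamma_{\mathsf{At}},p\Rightarrow p,\Delta_{\mathsf{At}}$; the atomic cut rule $\mathsf{Acut}$ has premises $\Gamma^1_{\mathsf{At}}\Rightarrow\Delta^1_{\mathsf{At}},p$ and $p,\Gamma^2_{\mathsf{At}}\Rightarrow\Delta^2_{\mathsf{At}}$ and conclusion $\Gamma^1_{\mathsf{At}},\Gamma^2_{\mathsf{At}}\Rightarrow\Delta^1_{\mathsf{At}},\Delta^2_{\mathsf{At}}$. $\mathcal{ST}$ is the base consisting of all instances of $\mathsf{Ainit}$ and $\mathsf{Acut}$. Atomic mapping: for a set of formulas $\Sigma_0$ with set of subformulas $S$, an atomic mapping is an injective function $\alpha:S\to\mathsf{At}$ with $\alpha(p)=p$ for every atom $p\in S$; write $p^A:=\alpha(A)$ (so $p^p=p$ for atoms).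 The simulation base $\mathcal{U}$ for $\Sigma_0$ and $\alpha$ consists exactly of the following atomic rules, for all formulas $A,B$ such that the displayed compound formula lies in $S$ (and for $p^\bot$ when $\bot\in S$), and all sets of atoms $\Gamma_{\mathsf{At}},\Delta_{\mathsf{At}},\Gamma'_{\mathsf{At}},\Delta'_{\mathsf{At}}$ (write $\Gamma,\Delta,\Gamma',\Delta'$ for these): $L\land$: from $p^A,p^B,\Gamma\Rightarrow\Delta$ infer $p^{A\land B},\Gamma\Rightarrow\Delta$; $R\land$: from $\Gamma\Rightarrow\Delta,p^A$ and $\Gamma'\Rightarrow\Delta',p^B$ infer $\Gamma,\Gamma'\Rightarrow\Delta,\Delta',p^{A\land B}$; $L\lor$: from $p^A,\Gamma\Rightarrow\Delta$ and $p^B,\Gamma'\Rightarrow\Delta'$ infer $p^{A\lor B},\Gamma,\Gamma'\Rightarrow\Delta,\Delta'$; $R\lor$: from $\Gamma\Rightarrow\Delta,p^A,p^B$ infer $\Gamma\Rightarrow\Delta,p^{A\lor B}$; $L\to$: from $\Gamma\Rightarrow\Delta,p^A$ and $p^B,\Gamma'\Rightarrow\Delta'$ infer $p^{A\to B},\Gamma,\Gamma'\Rightarrow\Delta,\Delta'$; $R\to$: from $p^A,\Gamma\Rightarrow\Delta,p^B$ infer $\Gamma\Rightarrow\Delta,p^{A\to B}$; $R\bot$: from $\Gamma\Rightarrow\Delta$ infer $\Gamma\Rightarrow\Delta,p^\bot$; $L\bot$: axiom $\Gamma,p^\bot\Rightarrow\Delta$. Put $\mathcal{U}_{\mathcal{ST}}:=\mathcal{U}\cup\mathcal{ST}$.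 *)

theory Defs
  imports Main
begin

type_synonym atom = nat

datatype form = Atom atom | Bot | And form form | Or form form | Imp form form

type_synonym aseq = "atom set \<times> atom set"
type_synonym arule = "aseq list \<times> aseq"

definition atomic_seq :: "aseq \<Rightarrow> bool" where
  "atomic_seq s \<longleftrightarrow> finite (fst s) \<and> finite (snd s)"

definition atomic_rule :: "arule \<Rightarrow> bool" where
  "atomic_rule r \<longleftrightarrow> (\<forall>s\<in>set (fst r). atomic_seq s) \<and> atomic_seq (snd r)"

definition is_base :: "arule set \<Rightarrow> bool" where
  "is_base B \<longleftrightarrow> (\<forall>r\<in>B. atomic_rule r)"

inductive derivable :: "arule set \<Rightarrow> aseq \<Rightarrow> bool" for B :: "arule set" where
  axiom: "\<lbrakk> ([], (G, D)) \<in> B; finite Th; finite Sg \<rbrakk>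
          \<Longrightarrow> derivable B (Th \<union> G, D \<union> Sg)"
| mix: "\<lbrakk> (ps, (G, D)) \<in> B;
          \<forall>i<length ps. finite (Th i) \<and> finite (Sg i)
                        \<and> derivable B (Th i \<union> fst (ps ! i), snd (ps ! i) \<union> Sg i) \<rbrakk>
        \<Longrightarrow> derivable B ((\<Union>i<length ps. Th i) \<union> G, D \<union> (\<Union>i<length ps. Sg i))"

fun is_atom :: "form \<Rightarrow> bool" where
  "is_atom (Atom p) = True"
| "is_atom _ = False"

fun wt :: "form \<Rightarrow> nat" where
  "wt (Atom p) = 0"
| "wt Bot = 1"
| "wt (And a b) = Suc (wt a + wt b)"
| "wt (Or a b) = Suc (wt a + wt b)"
| "wt (Imp a b) = Suc (wt a + wt b)"

text \<open>Otherwise, every compound formula of the context may be taken as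
  principal formula and the corresponding clause must hold (the clauses of the paper are
  stated as equivalences for an arbitrary choice of principal formula).  The implication
  clause is the (Inf) clause for a single antecedent formula.\<close>
function supp :: "arule set \<Rightarrow> form set \<Rightarrow> bool" where
  "supp B \<Gamma> =
    (if \<not> finite \<Gamma> then False
     else if (\<forall>F\<in>\<Gamma>. is_atom F) then derivable B ({}, {p. Atom p \<in> \<Gamma>})
     else (\<forall>F. F \<in> \<Gamma> \<longrightarrow>
       (case F of
          Atom p \<Rightarrow> True
        | Bot \<Rightarrow> supp B (\<Gamma> - {F})
        | And a b \<Rightarrow> supp B (insert a (\<Gamma> - {F})) \<and> supp B (insert b (\<Gamma> - {F}))
        | Or a b \<Rightarrow> supp B (insert a (insert b (\<Gamma> - {F})))
        | Imp a b \<Rightarrow> (\<forall>C Th. is_base C \<longrightarrow> B \<subseteq> C \<longrightarrow> finite Th \<longrightarrow>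
                         supp C (insert a (Atom ` Th)) \<longrightarrow>
                         supp C (Atom ` Th \<union> insert b (\<Gamma> - {F}))))))"
  by pat_completeness auto

lemma sum_wt_insert_le: "finite X \<Longrightarrow> sum wt (insert a X) \<le> wt a + sum wt X"
  by (simp add: sum.insert_if)

lemma sum_wt_remove: "finite X \<Longrightarrow> F \<in> X \<Longrightarrow> sum wt X = wt F + sum wt (X - {F})"
  by (simp add: sum.remove)

lemma sum_wt_atoms[simp]: "sum wt (Atom ` Th) = 0"
  by (rule sum.neutral) auto

termination
proof (relation "measure (\<lambda>(B, \<Gamma>). sum wt \<Gamma>)", goal_cases)
  case 1 then show ?case by simp
next
  case (2 B \<Gamma> F)
  then show ?case using sum_wt_remove[of \<Gamma> F] by simp
next
  case (3 B \<Gamma> F a b)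
  then show ?case using sum_wt_remove[of \<Gamma> F] sum_wt_insert_le[of "\<Gamma> - {F}" a] by simp
next
  case (4 B \<Gamma> F a b)
  then show ?case using sum_wt_remove[of \<Gamma> F] sum_wt_insert_le[of "\<Gamma> - {F}" b] by simp
next
  case (5 B \<Gamma> F a b)
  then show ?case using sum_wt_remove[of \<Gamma> F] sum_wt_insert_le[of "\<Gamma> - {F}" b]
      sum_wt_insert_le[of "insert b (\<Gamma> - {F})" a] by simp
next
  case (6 B \<Gamma> F a b C Th)
  then show ?case using sum_wt_remove[of \<Gamma> F] sum_wt_insert_le[of "Atom ` Th" a] by simp
next
  case (7 B \<Gamma> F a b C Th)
  have "sum wt (Atom ` Th \<union> insert b (\<Gamma> - {F})) \<le> sum wt (Atom ` Th) + sum wt (insert b (\<Gamma> - {F}))"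
    using 7 sum.union_inter[of "Atom ` Th" "insert b (\<Gamma> - {F})" wt] by simp
  then show ?case using 7 sum_wt_remove[of \<Gamma> F] sum_wt_insert_le[of "\<Gamma> - {F}" b] by simp
qed


fun subf :: "form \<Rightarrow> form set" where
  "subf (Atom p) = {Atom p}"
| "subf Bot = {Bot}"
| "subf (And a b) = insert (And a b) (subf a \<union> subf b)"
| "subf (Or a b) = insert (Or a b) (subf a \<union> subf b)"
| "subf (Imp a b) = insert (Imp a b) (subf a \<union> subf b)"

definition subfs :: "form set \<Rightarrow> form set" where
  "subfs S0 = (\<Union>F\<in>S0. subf F)"

text \<open>An atomic mapping for \<open>S0\<close>: injective on the subformulas, identity on atoms.
  \<open>\<alpha> A\<close> is the atom written \<open>p^A\<close> in the paper.\<close>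
definition atomic_mapping :: "form set \<Rightarrow> (form \<Rightarrow> atom) \<Rightarrow> bool" where
  "atomic_mapping S0 \<alpha> \<longleftrightarrow> inj_on \<alpha> (subfs S0) \<and> (\<forall>p. Atom p \<in> subfs S0 \<longrightarrow> \<alpha> (Atom p) = p)"

definition sim_base :: "form set \<Rightarrow> (form \<Rightarrow> atom) \<Rightarrow> arule set" where
  "sim_base S0 \<alpha> =
     {r. \<exists>A B G D G' D'. finite G \<and> finite D \<and> finite G' \<and> finite D' \<and>
        ( (And A B \<in> subfs S0 \<and>
            r = ([(insert (\<alpha> A) (insert (\<alpha> B) G), D)], (insert (\<alpha> (And A B)) G, D)))
        \<or> (And A B \<in> subfs S0 \<and>
            r = ([(G, insert (\<alpha> A) D), (G', insert (\<alpha> B) D')],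
                 (G \<union> G', insert (\<alpha> (And A B)) (D \<union> D'))))
        \<or> (Or A B \<in> subfs S0 \<and>
            r = ([(insert (\<alpha> A) G, D), (insert (\<alpha> B) G', D')],
                 (insert (\<alpha> (Or A B)) (G \<union> G'), D \<union> D')))
        \<or> (Or A B \<in> subfs S0 \<and>
            r = ([(G, insert (\<alpha> A) (insert (\<alpha> B) D))], (G, insert (\<alpha> (Or A B)) D)))
        \<or> (Imp A B \<in> subfs S0 \<and>
            r = ([(G, insert (\<alpha> A) D), (insert (\<alpha> B) G', D')],
                 (insert (\<alpha> (Imp A B)) (G \<union> G'), D \<union> D')))
        \<or> (Imp A B \<in> subfs S0 \<and>
            r = ([(insert (\<alpha> A) G, insert (\<alpha> B) D)], (G, insert (\<alpha> (Imp A B)) D)))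
        \<or> (Bot \<in> subfs S0 \<and> r = ([(G, D)], (G, insert (\<alpha> Bot) D)))
        \<or> (Bot \<in> subfs S0 \<and> r = ([], (insert (\<alpha> Bot) G, D))))}"

definition ST_base :: "arule set" where
  "ST_base =
     {r. \<exists>p G D. finite G \<and> finite D \<and> r = ([], (insert p G, insert p D))}
   \<union> {r. \<exists>p G1 D1 G2 D2. finite G1 \<and> finite D1 \<and> finite G2 \<and> finite D2 \<and>
        r = ([(G1, insert p D1), (insert p G2, D2)], (G1 \<union> G2, D1 \<union> D2))}"

definition sim_base_ST :: "form set \<Rightarrow> (form \<Rightarrow> atom) \<Rightarrow> arule set" where
  "sim_base_ST S0 \<alpha> = sim_base S0 \<alpha> \<union> ST_base"

end

theory Submission
  imports Defs
begin

lemma subf_refl: "F \<in> subf F" by (cases F) auto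

lemma subf_trans: "G \<in> subf F \<Longrightarrow> subf G \<subseteq> subf F"
  by (induction F) auto

lemma subfs_sub: "X \<in> subfs S0 \<Longrightarrow> Y \<in> subf X \<Longrightarrow> Y \<in> subfs S0"
  unfolding subfs_def using subf_trans by blast

lemma der_rule:
  assumes "(ps, (G, D)) \<in> B" "\<forall>i<length ps. derivable B (ps ! i)"
  shows "derivable B (G, D)"
proof -
  have "derivable B ((\<Union>i<length ps. (\<lambda>_. {}) i) \<union> G, D \<union> (\<Union>i<length ps. (\<lambda>_. {}) i))"
    by (rule derivable.mix[OF assms(1)]) (use assms(2) in auto)
  then show ?thesis by simp
qed

lemma der0: "([], (G, D)) \<in> B \<Longrightarrow> derivable B (G, D)"
  using der_rule[of "[]"] by auto

lemma der1: "([p1], (G, D)) \<in> B \<Longrightarrow> derivable B p1 \<Longrightarrow> derivable B (G, D)"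
  using der_rule[of "[p1]"] by auto

lemma der2: "([p1, p2], (G, D)) \<in> B \<Longrightarrow> derivable B p1 \<Longrightarrow> derivable B p2 \<Longrightarrow> derivable B (G, D)"
  using der_rule[of "[p1, p2]"] by (auto simp: less_Suc_eq)

lemma der_init: "ST_base \<subseteq> B \<Longrightarrow> finite G \<Longrightarrow> finite D \<Longrightarrow> derivable B (insert p G, insert p D)"
  by (rule der0) (auto simp: ST_base_def)

lemma der_cut:
  assumes "ST_base \<subseteq> B" "derivable B (G1, insert p D1)" "derivable B (insert p G2, D2)"
    "finite G1" "finite D1" "finite G2" "finite D2"
  shows "derivable B (G1 \<union> G2, D1 \<union> D2)"
  apply (rule der2[OF _ assms(2,3)])
  using assms(1,4-) unfolding ST_base_def by blast

lemma der_mono: "derivable B s \<Longrightarrow> B \<subseteq> C \<Longrightarrow> derivable C s"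
proof (induction rule: derivable.induct)
  case (axiom G D Th Sg)
  then show ?case by (auto intro: derivable.axiom)
next
  case (mix ps G D Th Sg)
  then show ?case by (intro derivable.mix) auto
qed

lemma der_weak:
  assumes "derivable B s" "finite X" "finite Y"
  shows "derivable B (X \<union> fst s, snd s \<union> Y)"
  using assms(1)
proof (induction rule: derivable.induct)
  case (axiom G D Th Sg)
  have "derivable B ((X \<union> Th) \<union> G, D \<union> (Sg \<union> Y))"
    by (rule derivable.axiom) (use axiom assms in auto)
  then show ?case by (simp add: Un_ac)
next
  case (mix ps G D Th Sg)
  show ?case
  proof (cases "ps = []")
    case True
    have "derivable B (X \<union> G, D \<union> Y)"
      by (rule derivable.axiom) (use mix True assms in auto)
    then show ?thesis using True by simp
  next
    case False
    have "derivable B ((\<Union>i<length ps. X \<union> Th i) \<union> G, D \<union> (\<Union>i<length ps. Sg i \<union> Y))"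
      by (rule derivable.mix[OF mix(1)]) (use mix assms in \<open>auto simp: Un_ac\<close>)
    moreover have "(\<Union>i<length ps. X \<union> Th i) = X \<union> (\<Union>i<length ps. Th i)"
      "(\<Union>i<length ps. Sg i \<union> Y) = (\<Union>i<length ps. Sg i) \<union> Y"
      using False by auto
    ultimately show ?thesis by (simp add: Un_ac)
  qed
qed

lemma der_elim:
  assumes "derivable (insert ([], ({}, {q})) B) s" "ST_base \<subseteq> B"
  shows "derivable B (insert q (fst s), snd s)"
  using assms(1)
proof (induction rule: derivable.induct)
  case (axiom G D Th Sg)
  show ?case
  proof (cases "([], (G, D)) \<in> B")
    case True
    have "derivable B ((insert q Th) \<union> G, D \<union> Sg)"
      by (rule derivable.axiom) (use axiom True in auto)
    then show ?thesis by simp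
  next
    case False
    then have "G = {}" "D = {q}" using axiom by auto
    then show ?thesis using der_init[OF assms(2), of Th Sg q] axiom by simp
  qed
next
  case (mix ps G D Th Sg)
  show ?case
  proof (cases "(ps, (G, D)) \<in> B")
    case True
    have "derivable B ((\<Union>i<length ps. insert q (Th i)) \<union> G, D \<union> (\<Union>i<length ps. Sg i))"
      by (rule derivable.mix[OF True]) (use mix in auto)
    from der_weak[OF this, of "{q}" "{}"]
    have "derivable B ({q} \<union> ((\<Union>i<length ps. insert q (Th i)) \<union> G), D \<union> (\<Union>i<length ps. Sg i))"
      by simp
    moreover have "{q} \<union> ((\<Union>i<length ps. insert q (Th i)) \<union> G) = insert q ((\<Union>i<length ps. Th i) \<union> G)"
      by auto
    ultimately show ?thesis by simp
  next
    case False
    then have "ps = []" "G = {}" "D = {q}" using mix by auto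
    then show ?thesis using der_init[OF assms(2), of "{}" "{}" q] by simp
  qed
qed


definition cl :: "arule set \<Rightarrow> form set \<Rightarrow> form \<Rightarrow> bool" where
  "cl B \<Gamma> F =
       (case F of
          Atom p \<Rightarrow> True
        | Bot \<Rightarrow> supp B (\<Gamma> - {F})
        | And a b \<Rightarrow> supp B (insert a (\<Gamma> - {F})) \<and> supp B (insert b (\<Gamma> - {F}))
        | Or a b \<Rightarrow> supp B (insert a (insert b (\<Gamma> - {F})))
        | Imp a b \<Rightarrow> (\<forall>C Th. is_base C \<longrightarrow> B \<subseteq> C \<longrightarrow> finite Th \<longrightarrow>
                         supp C (insert a (Atom ` Th)) \<longrightarrow>
                         supp C (Atom ` Th \<union> insert b (\<Gamma> - {F}))))"

lemma supp_unf: "supp B \<Gamma> =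
    (if \<not> finite \<Gamma> then False
     else if (\<forall>F\<in>\<Gamma>. is_atom F) then derivable B ({}, {p. Atom p \<in> \<Gamma>})
     else (\<forall>F. F \<in> \<Gamma> \<longrightarrow> cl B \<Gamma> F))"
  unfolding cl_def by (rule supp.simps)

lemma sbI:
  assumes "finite G" "finite D" "finite G'" "finite D'"
   "( (And A B \<in> subfs S0 \<and>
            r = ([(insert (\<alpha> A) (insert (\<alpha> B) G), D)], (insert (\<alpha> (And A B)) G, D)))
        \<or> (And A B \<in> subfs S0 \<and>
            r = ([(G, insert (\<alpha> A) D), (G', insert (\<alpha> B) D')],
                 (G \<union> G', insert (\<alpha> (And A B)) (D \<union> D'))))
        \<or> (Or A B \<in> subfs S0 \<and>
            r = ([(insert (\<alpha> A) G, D), (insert (\<alpha> B) G', D')],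
                 (insert (\<alpha> (Or A B)) (G \<union> G'), D \<union> D')))
        \<or> (Or A B \<in> subfs S0 \<and>
            r = ([(G, insert (\<alpha> A) (insert (\<alpha> B) D))], (G, insert (\<alpha> (Or A B)) D)))
        \<or> (Imp A B \<in> subfs S0 \<and>
            r = ([(G, insert (\<alpha> A) D), (insert (\<alpha> B) G', D')],
                 (insert (\<alpha> (Imp A B)) (G \<union> G'), D \<union> D')))
        \<or> (Imp A B \<in> subfs S0 \<and>
            r = ([(insert (\<alpha> A) G, insert (\<alpha> B) D)], (G, insert (\<alpha> (Imp A B)) D)))
        \<or> (Bot \<in> subfs S0 \<and> r = ([(G, D)], (G, insert (\<alpha> Bot) D)))
        \<or> (Bot \<in> subfs S0 \<and> r = ([], (insert (\<alpha> Bot) G, D))))"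
  shows "r \<in> sim_base S0 \<alpha>"
  unfolding sim_base_def mem_Collect_eq
  apply (rule exI[of _ A], rule exI[of _ B], rule exI[of _ G], rule exI[of _ D], rule exI[of _ G'], rule exI[of _ D'])
  using assms by blast

lemma mems:
  "\<And>G D. And A B \<in> subfs S0 \<Longrightarrow> finite G \<Longrightarrow> finite D \<Longrightarrow>
     ([(insert (\<alpha> A) (insert (\<alpha> B) G), D)], (insert (\<alpha> (And A B)) G, D)) \<in> sim_base S0 \<alpha>"
  "\<And>G D G' D'. And A B \<in> subfs S0 \<Longrightarrow> finite G \<Longrightarrow> finite D \<Longrightarrow> finite G' \<Longrightarrow> finite D' \<Longrightarrow>
     ([(G, insert (\<alpha> A) D), (G', insert (\<alpha> B) D')], (G \<union> G', insert (\<alpha> (And A B)) (D \<union> D'))) \<in> sim_base S0 \<alpha>"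
  "\<And>G D G' D'. Or A B \<in> subfs S0 \<Longrightarrow> finite G \<Longrightarrow> finite D \<Longrightarrow> finite G' \<Longrightarrow> finite D' \<Longrightarrow>
     ([(insert (\<alpha> A) G, D), (insert (\<alpha> B) G', D')], (insert (\<alpha> (Or A B)) (G \<union> G'), D \<union> D')) \<in> sim_base S0 \<alpha>"
  "\<And>G D. Or A B \<in> subfs S0 \<Longrightarrow> finite G \<Longrightarrow> finite D \<Longrightarrow>
     ([(G, insert (\<alpha> A) (insert (\<alpha> B) D))], (G, insert (\<alpha> (Or A B)) D)) \<in> sim_base S0 \<alpha>"
  "\<And>G D G' D'. Imp A B \<in> subfs S0 \<Longrightarrow> finite G \<Longrightarrow> finite D \<Longrightarrow> finite G' \<Longrightarrow> finite D' \<Longrightarrow>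
     ([(G, insert (\<alpha> A) D), (insert (\<alpha> B) G', D')], (insert (\<alpha> (Imp A B)) (G \<union> G'), D \<union> D')) \<in> sim_base S0 \<alpha>"
  "\<And>G D. Imp A B \<in> subfs S0 \<Longrightarrow> finite G \<Longrightarrow> finite D \<Longrightarrow>
     ([(insert (\<alpha> A) G, insert (\<alpha> B) D)], (G, insert (\<alpha> (Imp A B)) D)) \<in> sim_base S0 \<alpha>"
  "\<And>G D. Bot \<in> subfs S0 \<Longrightarrow> finite G \<Longrightarrow> finite D \<Longrightarrow>
     ([(G, D)], (G, insert (\<alpha> Bot) D)) \<in> sim_base S0 \<alpha>"
  "\<And>G D. Bot \<in> subfs S0 \<Longrightarrow> finite G \<Longrightarrow> finite D \<Longrightarrow>
     ([], (insert (\<alpha> Bot) G, D)) \<in> sim_base S0 \<alpha>"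
  subgoal for G D by (rule sbI[where G=G and D=D and G'="{}" and D'="{}" and A=A and B=B]) auto
  subgoal for G D G' D' by (rule sbI[where G=G and D=D and G'=G' and D'=D' and A=A and B=B]) auto
  subgoal for G D G' D' by (rule sbI[where G=G and D=D and G'=G' and D'=D' and A=A and B=B]) auto
  subgoal for G D by (rule sbI[where G=G and D=D and G'="{}" and D'="{}" and A=A and B=B]) auto
  subgoal for G D G' D' by (rule sbI[where G=G and D=D and G'=G' and D'=D' and A=A and B=B]) auto
  subgoal for G D by (rule sbI[where G=G and D=D and G'="{}" and D'="{}" and A=A and B=B]) auto
  subgoal for G D by (rule sbI[where G=G and D=D and G'="{}" and D'="{}" and A=A and B=B]) auto
  subgoal for G D by (rule sbI[where G=G and D=D and G'="{}" and D'="{}" and A=A and B=B]) auto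
  done

context
  fixes S0 :: "form set" and \<alpha> :: "form \<Rightarrow> atom" and B :: "arule set"
  assumes U: "sim_base_ST S0 \<alpha> \<subseteq> B"
begin

lemma STB: "ST_base \<subseteq> B" and SB: "sim_base S0 \<alpha> \<subseteq> B"
  using U by (auto simp: sim_base_ST_def)

lemma lem_bot:
  assumes "Bot \<in> subfs S0" "finite R"
  shows "derivable B ({}, insert (\<alpha> Bot) R) \<longleftrightarrow> derivable B ({}, R)"
proof
  assume "derivable B ({}, insert (\<alpha> Bot) R)"
  moreover have "derivable B (insert (\<alpha> Bot) {}, {})"
    by (rule der0, rule subsetD[OF SB], rule mems(8)) (use assms in auto)
  ultimately show "derivable B ({}, R)"
    using der_cut[OF STB, of "{}" "\<alpha> Bot" R "{}" "{}"] assms by simp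
next
  assume "derivable B ({}, R)"
  then show "derivable B ({}, insert (\<alpha> Bot) R)"
    using der1[of "({}, R)" "{}" "insert (\<alpha> Bot) R" B] subsetD[OF SB mems(7)[where G="{}" and D=R]] assms by simp
qed

lemma lem_and:
  assumes "And A1 B1 \<in> subfs S0" "finite R"
  shows "derivable B ({}, insert (\<alpha> (And A1 B1)) R) \<longleftrightarrow>
         derivable B ({}, insert (\<alpha> A1) R) \<and> derivable B ({}, insert (\<alpha> B1) R)"
proof
  assume d: "derivable B ({}, insert (\<alpha> (And A1 B1)) R)"
  have "derivable B (insert (\<alpha> (And A1 B1)) {}, {\<alpha> A1})"
  proof (rule der1)
    show "([(insert (\<alpha> A1) (insert (\<alpha> B1) {}), {\<alpha> A1})], (insert (\<alpha> (And A1 B1)) {}, {\<alpha> A1})) \<in> B"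
      by (rule subsetD[OF SB], rule mems(1)) (use assms in auto)
    show "derivable B (insert (\<alpha> A1) (insert (\<alpha> B1) {}), {\<alpha> A1})"
      using der_init[OF STB, of "{\<alpha> B1}" "{}" "\<alpha> A1"] by simp
  qed
  then have 1: "derivable B ({}, insert (\<alpha> A1) R)"
    using der_cut[OF STB d, of "{}" "{\<alpha> A1}"] assms by simp
  have "derivable B (insert (\<alpha> (And A1 B1)) {}, {\<alpha> B1})"
  proof (rule der1)
    show "([(insert (\<alpha> A1) (insert (\<alpha> B1) {}), {\<alpha> B1})], (insert (\<alpha> (And A1 B1)) {}, {\<alpha> B1})) \<in> B"
      by (rule subsetD[OF SB], rule mems(1)) (use assms in auto)
    show "derivable B (insert (\<alpha> A1) (insert (\<alpha> B1) {}), {\<alpha> B1})"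
      using der_init[OF STB, of "{\<alpha> A1}" "{}" "\<alpha> B1"] by (simp add: insert_commute)
  qed
  then have 2: "derivable B ({}, insert (\<alpha> B1) R)"
    using der_cut[OF STB d, of "{}" "{\<alpha> B1}"] assms by simp
  show "derivable B ({}, insert (\<alpha> A1) R) \<and> derivable B ({}, insert (\<alpha> B1) R)" using 1 2 by simp
next
  assume "derivable B ({}, insert (\<alpha> A1) R) \<and> derivable B ({}, insert (\<alpha> B1) R)"
  then have d: "derivable B ({}, insert (\<alpha> A1) R)" "derivable B ({}, insert (\<alpha> B1) R)" by auto
  have "([({}, insert (\<alpha> A1) R), ({}, insert (\<alpha> B1) R)], ({} \<union> {}, insert (\<alpha> (And A1 B1)) (R \<union> R))) \<in> B"
    by (rule subsetD[OF SB], rule mems(2)) (use assms in auto)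
  from der2[OF this d] show "derivable B ({}, insert (\<alpha> (And A1 B1)) R)" by simp
qed

lemma lem_or:
  assumes "Or A1 B1 \<in> subfs S0" "finite R"
  shows "derivable B ({}, insert (\<alpha> (Or A1 B1)) R) \<longleftrightarrow>
         derivable B ({}, insert (\<alpha> A1) (insert (\<alpha> B1) R))"
proof
  assume d: "derivable B ({}, insert (\<alpha> (Or A1 B1)) R)"
  have "([(insert (\<alpha> A1) {}, {\<alpha> A1}), (insert (\<alpha> B1) {}, {\<alpha> B1})],
         (insert (\<alpha> (Or A1 B1)) ({} \<union> {}), {\<alpha> A1} \<union> {\<alpha> B1})) \<in> B"
    by (rule subsetD[OF SB], rule mems(3)) (use assms in auto)
  from der2[OF this] have "derivable B (insert (\<alpha> (Or A1 B1)) {}, {\<alpha> A1, \<alpha> B1})"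
    using der_init[OF STB, of "{}" "{}" "\<alpha> A1"] der_init[OF STB, of "{}" "{}" "\<alpha> B1"] by (simp add: insert_commute)
  then show "derivable B ({}, insert (\<alpha> A1) (insert (\<alpha> B1) R))"
    using der_cut[OF STB d, of "{}" "{\<alpha> A1, \<alpha> B1}"] assms by (simp add: Un_ac)
next
  assume d: "derivable B ({}, insert (\<alpha> A1) (insert (\<alpha> B1) R))"
  have "([({}, insert (\<alpha> A1) (insert (\<alpha> B1) R))], ({}, insert (\<alpha> (Or A1 B1)) R)) \<in> B"
    by (rule subsetD[OF SB], rule mems(4)) (use assms in auto)
  from der1[OF this d] show "derivable B ({}, insert (\<alpha> (Or A1 B1)) R)" .
qed

lemma lem_impL:
  assumes "Imp A1 B1 \<in> subfs S0" "finite R" "finite Th"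
    "derivable B ({}, insert (\<alpha> (Imp A1 B1)) R)" "derivable B ({}, insert (\<alpha> A1) Th)"
  shows "derivable B ({}, insert (\<alpha> B1) R \<union> Th)"
proof -
  have "([({}, insert (\<alpha> A1) Th), (insert (\<alpha> B1) {}, {\<alpha> B1})],
         (insert (\<alpha> (Imp A1 B1)) ({} \<union> {}), Th \<union> {\<alpha> B1})) \<in> B"
    by (rule subsetD[OF SB], rule mems(5)) (use assms in auto)
  from der2[OF this assms(5)] have "derivable B (insert (\<alpha> (Imp A1 B1)) {}, Th \<union> {\<alpha> B1})"
    using der_init[OF STB, of "{}" "{}" "\<alpha> B1"] by simp
  then show ?thesis
    using der_cut[OF STB assms(4), of "{}" "Th \<union> {\<alpha> B1}"] assms by (simp add: Un_ac)
qed

lemma lem_impR: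
  assumes "Imp A1 B1 \<in> subfs S0" "finite R"
    "derivable B ({\<alpha> A1}, insert (\<alpha> B1) R)"
  shows "derivable B ({}, insert (\<alpha> (Imp A1 B1)) R)"
proof -
  have "([(insert (\<alpha> A1) {}, insert (\<alpha> B1) R)], ({}, insert (\<alpha> (Imp A1 B1)) R)) \<in> B"
    by (rule subsetD[OF SB], rule mems(6)) (use assms in auto)
  from der1[OF this] show ?thesis using assms by simp
qed

end


lemma cl_atom: "is_atom F \<Longrightarrow> cl B \<Gamma> F"
  by (cases F) (auto simp: cl_def)

lemma main:
  assumes am: "atomic_mapping S0 \<alpha>"
  shows "is_base B \<Longrightarrow> sim_base_ST S0 \<alpha> \<subseteq> B \<Longrightarrow> finite \<Theta> \<Longrightarrow> finite \<Sigma> \<Longrightarrow> \<Sigma> \<subseteq> subfs S0 \<Longrightarrow>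
    supp B (\<Sigma> \<union> Atom ` \<Theta>) \<longleftrightarrow> derivable B ({}, \<alpha> ` \<Sigma> \<union> \<Theta>)"
proof (induction "sum wt \<Sigma>" arbitrary: \<Sigma> B \<Theta> rule: less_induct)
  case (less \<Sigma> B \<Theta>)
  have IH: "supp C (X \<union> Atom ` Th) \<longleftrightarrow> derivable C ({}, \<alpha> ` X \<union> Th)"
    if "sum wt X < sum wt \<Sigma>" "is_base C" "sim_base_ST S0 \<alpha> \<subseteq> C" "finite Th" "finite X" "X \<subseteq> subfs S0"
    for X C Th using less.hyps that by blast
  have bB: "is_base B" and UB: "sim_base_ST S0 \<alpha> \<subseteq> B" and fT: "finite \<Theta>" and fS: "finite \<Sigma>"
    and sS: "\<Sigma> \<subseteq> subfs S0" using less.prems by auto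
  have STB: "ST_base \<subseteq> B" using UB by (auto simp: sim_base_ST_def)
  show ?case
  proof (cases "\<forall>F\<in>\<Sigma>. is_atom F")
    case True
    have isat: "is_atom F \<Longrightarrow> \<exists>p. F = Atom p" for F by (cases F) auto
    have eq: "{p. Atom p \<in> \<Sigma> \<union> Atom ` \<Theta>} = \<alpha> ` \<Sigma> \<union> \<Theta>"
    proof (intro equalityI subsetI)
      fix p assume "p \<in> {p. Atom p \<in> \<Sigma> \<union> Atom ` \<Theta>}"
      then have "Atom p \<in> \<Sigma> \<or> p \<in> \<Theta>" by auto
      then show "p \<in> \<alpha> ` \<Sigma> \<union> \<Theta>"
      proof
        assume h: "Atom p \<in> \<Sigma>"
        then have "\<alpha> (Atom p) = p" using am sS unfolding atomic_mapping_def by auto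
        then show ?thesis using h by (metis UnI1 image_eqI)
      qed simp
    next
      fix p assume "p \<in> \<alpha> ` \<Sigma> \<union> \<Theta>"
      then show "p \<in> {p. Atom p \<in> \<Sigma> \<union> Atom ` \<Theta>}"
      proof
        assume "p \<in> \<alpha> ` \<Sigma>"
        then obtain F where F: "F \<in> \<Sigma>" "p = \<alpha> F" by auto
        then obtain q where q: "F = Atom q" using True isat by blast
        then have "\<alpha> F = q" using am sS F unfolding atomic_mapping_def by auto
        then show ?thesis using F q by auto
      qed auto
    qed
    have "\<forall>F\<in>\<Sigma> \<union> Atom ` \<Theta>. is_atom F" using True by auto
    then show ?thesis using fS fT eq by (subst supp_unf) simp
  next
    case False
    have key: "cl B (\<Sigma> \<union> Atom ` \<Theta>) F \<longleftrightarrow> derivable B ({}, \<alpha> ` \<Sigma> \<union> \<Theta>)"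
      if F: "F \<in> \<Sigma>" "\<not> is_atom F" for F
    proof -
      define R where "R = \<alpha> ` (\<Sigma> - {F}) \<union> \<Theta>"
      have fR: "finite R" using fS fT R_def by simp
      have FS0: "F \<in> subfs S0" using F sS by auto
      have rem: "\<Sigma> \<union> Atom ` \<Theta> - {F} = (\<Sigma> - {F}) \<union> Atom ` \<Theta>" using F(2) by auto
      have aS: "\<alpha> ` \<Sigma> \<union> \<Theta> = insert (\<alpha> F) R" using F(1) R_def by auto
      have sw: "sum wt \<Sigma> = wt F + sum wt (\<Sigma> - {F})" using sum_wt_remove[OF fS F(1)] .
      have IHX: "supp C (X \<union> (\<Sigma> - {F}) \<union> Atom ` (Th \<union> \<Theta>)) \<longleftrightarrow> derivable C ({}, \<alpha> ` X \<union> R \<union> Th)"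
        if X: "finite X" "X \<subseteq> subf F" "sum wt X < wt F" and C: "is_base C" "B \<subseteq> C" "finite Th"
        for X C Th
      proof -
        have "sum wt (X \<union> (\<Sigma> - {F})) \<le> sum wt X + sum wt (\<Sigma> - {F})"
          using sum.union_inter[of X "\<Sigma> - {F}" wt] X fS by simp
        then have lt: "sum wt (X \<union> (\<Sigma> - {F})) < sum wt \<Sigma>" using sw X by simp
        have "X \<union> (\<Sigma> - {F}) \<subseteq> subfs S0" using X sS subfs_sub[OF FS0] by auto
        from IH[OF lt C(1) _ _ _ this, of "Th \<union> \<Theta>"] UB C X fS fT
        have "supp C (X \<union> (\<Sigma> - {F}) \<union> Atom ` (Th \<union> \<Theta>)) \<longleftrightarrow> derivable C ({}, \<alpha> ` (X \<union> (\<Sigma> - {F})) \<union> (Th \<union> \<Theta>))"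
          by auto
        moreover have "\<alpha> ` (X \<union> (\<Sigma> - {F})) \<union> (Th \<union> \<Theta>) = \<alpha> ` X \<union> R \<union> Th" by (auto simp: R_def)
        ultimately show ?thesis by simp
      qed
      have IH1: "supp C ({G} \<union> Atom ` Th) \<longleftrightarrow> derivable C ({}, insert (\<alpha> G) Th)"
        if "G \<in> subf F" "wt G < wt F" "is_base C" "B \<subseteq> C" "finite Th" for G C Th
      proof -
        have "sum wt {G} < sum wt \<Sigma>" using that sw by simp
        from IH[OF this] that UB subfs_sub[OF FS0 that(1)] show ?thesis by auto
      qed
      show ?thesis
      proof (cases F)
        case (Atom p) with F show ?thesis by simp
      next
        case Bot
        have "cl B (\<Sigma> \<union> Atom ` \<Theta>) F = supp B ((\<Sigma> - {F}) \<union> Atom ` \<Theta>)" using Bot rem by (simp add: cl_def del: supp.simps)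
        also have "\<dots> \<longleftrightarrow> derivable B ({}, R)"
        proof -
          have lt: "sum wt (\<Sigma> - {F}) < sum wt \<Sigma>" using sw Bot by simp
          have "supp B ((\<Sigma> - {F}) \<union> Atom ` \<Theta>) \<longleftrightarrow> derivable B ({}, \<alpha> ` (\<Sigma> - {F}) \<union> \<Theta>)"
            by (rule IH[OF lt bB UB fT]) (use fS sS in auto)
          then show ?thesis by (simp add: R_def)
        qed
        also have "\<dots> \<longleftrightarrow> derivable B ({}, insert (\<alpha> Bot) R)" using lem_bot[OF UB] FS0 Bot fR by simp
        finally show ?thesis using aS Bot by simp
      next
        case (And A1 B1)
        have s1: "A1 \<in> subf F" "B1 \<in> subf F" using And subf_refl by auto
        have "cl B (\<Sigma> \<union> Atom ` \<Theta>) F \<longleftrightarrow>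
              supp B ({A1} \<union> (\<Sigma> - {F}) \<union> Atom ` ({} \<union> \<Theta>)) \<and> supp B ({B1} \<union> (\<Sigma> - {F}) \<union> Atom ` ({} \<union> \<Theta>))"
          using And rem by (simp add: cl_def del: supp.simps)
        also have "\<dots> \<longleftrightarrow> derivable B ({}, insert (\<alpha> A1) R) \<and> derivable B ({}, insert (\<alpha> B1) R)"
          using IHX[of "{A1}" B "{}"] IHX[of "{B1}" B "{}"] And bB s1 by simp
        also have "\<dots> \<longleftrightarrow> derivable B ({}, insert (\<alpha> F) R)" using lem_and[OF UB] FS0 And fR by simp
        finally show ?thesis using aS by simp
      next
        case (Or A1 B1)
        have s1: "{A1, B1} \<subseteq> subf F" using Or subf_refl by auto
        have w: "sum wt {A1, B1} < wt F" using Or by (cases "A1 = B1") auto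
        have "cl B (\<Sigma> \<union> Atom ` \<Theta>) F \<longleftrightarrow>
              supp B ({A1, B1} \<union> (\<Sigma> - {F}) \<union> Atom ` ({} \<union> \<Theta>))"
          using Or rem by (simp add: cl_def del: supp.simps)
        also have "\<dots> \<longleftrightarrow> derivable B ({}, insert (\<alpha> A1) (insert (\<alpha> B1) R))"
          using IHX[OF _ s1 w bB, of "{}"] by simp
        also have "\<dots> \<longleftrightarrow> derivable B ({}, insert (\<alpha> F) R)" using lem_or[OF UB] FS0 Or fR by simp
        finally show ?thesis using aS by simp
      next
        case (Imp A1 B1)
        have s1: "A1 \<in> subf F" "B1 \<in> subf F" using Imp subf_refl by auto
        have "cl B (\<Sigma> \<union> Atom ` \<Theta>) F \<longleftrightarrow>
           (\<forall>C Th. is_base C \<longrightarrow> B \<subseteq> C \<longrightarrow> finite Th \<longrightarrow>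
                         supp C ({A1} \<union> Atom ` Th) \<longrightarrow>
                         supp C ({B1} \<union> (\<Sigma> - {F}) \<union> Atom ` (Th \<union> \<Theta>)))"
        proof -
          have "\<And>Th. insert A1 (Atom ` Th) = {A1} \<union> Atom ` Th" by simp
          moreover have "\<And>Th. Atom ` Th \<union> insert B1 ((\<Sigma> - {F}) \<union> Atom ` \<Theta>) = {B1} \<union> (\<Sigma> - {F}) \<union> Atom ` (Th \<union> \<Theta>)"
            by auto
          ultimately show ?thesis using Imp rem by (simp add: cl_def del: supp.simps)
        qed
        also have "\<dots> \<longleftrightarrow> (\<forall>C Th. is_base C \<longrightarrow> B \<subseteq> C \<longrightarrow> finite Th \<longrightarrow>
                         derivable C ({}, insert (\<alpha> A1) Th) \<longrightarrow>
                         derivable C ({}, insert (\<alpha> B1) R \<union> Th))"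
        proof -
          have "\<And>C Th. is_base C \<Longrightarrow> B \<subseteq> C \<Longrightarrow> finite Th \<Longrightarrow>
             (supp C ({A1} \<union> Atom ` Th) \<longrightarrow> supp C ({B1} \<union> (\<Sigma> - {F}) \<union> Atom ` (Th \<union> \<Theta>))) \<longleftrightarrow>
             (derivable C ({}, insert (\<alpha> A1) Th) \<longrightarrow> derivable C ({}, insert (\<alpha> B1) R \<union> Th))"
            using IH1[OF s1(1)] IHX[of "{B1}"] s1 Imp by auto
          then show ?thesis by blast
        qed
        also have "\<dots> \<longleftrightarrow> derivable B ({}, insert (\<alpha> F) R)"
        proof
          assume h: "\<forall>C Th. is_base C \<longrightarrow> B \<subseteq> C \<longrightarrow> finite Th \<longrightarrow>
                         derivable C ({}, insert (\<alpha> A1) Th) \<longrightarrow>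
                         derivable C ({}, insert (\<alpha> B1) R \<union> Th)"
          define C where "C = insert ([], ({}, {\<alpha> A1})) B"
          have bC: "is_base C" using bB unfolding C_def is_base_def atomic_rule_def atomic_seq_def by auto
          have dC: "derivable C ({}, insert (\<alpha> A1) {})" by (rule der0) (simp add: C_def)
          have "B \<subseteq> C" by (auto simp: C_def)
          with h bC dC have "derivable C ({}, insert (\<alpha> B1) R \<union> {})" by blast
          from der_elim[OF this[unfolded C_def] STB] have "derivable B ({\<alpha> A1}, insert (\<alpha> B1) R)" by simp
          from lem_impR[OF UB _ fR this] FS0 Imp show "derivable B ({}, insert (\<alpha> F) R)" by simp
        next
          assume d: "derivable B ({}, insert (\<alpha> F) R)"
          show "\<forall>C Th. is_base C \<longrightarrow> B \<subseteq> C \<longrightarrow> finite Th \<longrightarrow>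
                         derivable C ({}, insert (\<alpha> A1) Th) \<longrightarrow>
                         derivable C ({}, insert (\<alpha> B1) R \<union> Th)"
          proof (intro allI impI)
            fix C Th assume C: "is_base C" "B \<subseteq> C" "finite Th" "derivable C ({}, insert (\<alpha> A1) Th)"
            have UC: "sim_base_ST S0 \<alpha> \<subseteq> C" using UB C by auto
            from der_mono[OF d C(2)] have "derivable C ({}, insert (\<alpha> (Imp A1 B1)) R)" using Imp by simp
            from lem_impL[OF UC _ fR C(3) this C(4)] FS0 Imp show "derivable C ({}, insert (\<alpha> B1) R \<union> Th)"
              by simp
          qed
        qed
        finally show ?thesis using aS by simp
      qed
    qed
    obtain F0 where F0: "F0 \<in> \<Sigma>" "\<not> is_atom F0" using False by auto
    have "supp B (\<Sigma> \<union> Atom ` \<Theta>) \<longleftrightarrow> (\<forall>F. F \<in> \<Sigma> \<union> Atom ` \<Theta> \<longrightarrow> cl B (\<Sigma> \<union> Atom ` \<Theta>) F)"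
      using False fS fT by (subst supp_unf) auto
    also have "\<dots> \<longleftrightarrow> derivable B ({}, \<alpha> ` \<Sigma> \<union> \<Theta>)"
    proof
      assume "\<forall>F. F \<in> \<Sigma> \<union> Atom ` \<Theta> \<longrightarrow> cl B (\<Sigma> \<union> Atom ` \<Theta>) F"
      then show "derivable B ({}, \<alpha> ` \<Sigma> \<union> \<Theta>)" using key[OF F0] F0 by auto
    next
      assume d: "derivable B ({}, \<alpha> ` \<Sigma> \<union> \<Theta>)"
      show "\<forall>F. F \<in> \<Sigma> \<union> Atom ` \<Theta> \<longrightarrow> cl B (\<Sigma> \<union> Atom ` \<Theta>) F"
      proof (intro allI impI)
        fix F assume "F \<in> \<Sigma> \<union> Atom ` \<Theta>"
        then show "cl B (\<Sigma> \<union> Atom ` \<Theta>) F"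
          using key d cl_atom by (cases "is_atom F") auto
      qed
    qed
    finally show ?thesis .
  qed
qed

theorem lemma5:
  fixes \<Gamma> \<Delta> \<Sigma> :: "form set" and \<alpha> :: "form \<Rightarrow> atom" and \<Theta> :: "atom set"
    and \<B> :: "arule set"
  assumes "finite \<Gamma>" and "finite \<Delta>"
    and "atomic_mapping (\<Gamma> \<union> \<Delta>) \<alpha>"
    and "finite \<Theta>"
    and "finite \<Sigma>" and "\<Sigma> \<noteq> {}" and "\<Sigma> \<subseteq> subfs (\<Gamma> \<union> \<Delta>)"
    and "is_base \<B>" and "sim_base_ST (\<Gamma> \<union> \<Delta>) \<alpha> \<subseteq> \<B>"
  shows "supp \<B> (\<Sigma> \<union> Atom ` \<Theta>) \<longleftrightarrow> derivable \<B> ({}, \<alpha> ` \<Sigma> \<union> \<Theta>)"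
  using main[OF assms(3) assms(8) assms(9) assms(4) assms(5) assms(7)] .

end
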